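(* For every graph $G$, $\alpha\text{-}tw(G)=\mu\text{-}tw(M(G))$.
   Context: All graphs are finite and simple. $M(G)$ is the graph obtained from $G$ by adding, for each vertex $v\in V(G)$, a new vertex $v'$ and the edge $vv'$. A tree decomposition of a graph $G$ is a tree $T$ with bags $B_t\subseteq V(G)$ such that nodes containing a given vertex induce a connected subtree and every edge lies in some bag. An induced matching is a set $M$ of pairwise disjoint edges such that the subgraph induced by their endpoints has exactly the edges of $M$. For $S\subseteq V(G)$: $\mu_G(S)$ is the maximum size of an induced matching of $G$ all of whose edges intersect $S$; $\alpha_G(S)$ is the maximum size of an independent set of $G$ contained in $S$. For $\lambda\in\{\mu,\alpha\}$, $\lambda_G(\mathcal{T})=\max_t\lambda_G(B_t)$ and $\lambda\text{-}tw(G)$ is its minimum over all tree decompositions $\mathcal{T}$ of $G$. *)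

theory Defs
  imports Main
begin

type_synonym 'a graph = "'a set \<times> 'a set set"

abbreviation verts :: "'a graph \<Rightarrow> 'a set" where "verts G \<equiv> fst G"
abbreviation edges :: "'a graph \<Rightarrow> 'a set set" where "edges G \<equiv> snd G"

definition graph :: "'a graph \<Rightarrow> bool" where
  "graph G \<longleftrightarrow> finite (verts G) \<and>
     (\<forall>e\<in>edges G. \<exists>u v. e = {u, v} \<and> u \<noteq> v \<and> u \<in> verts G \<and> v \<in> verts G)"

definition adj :: "'a graph \<Rightarrow> 'a \<Rightarrow> 'a \<Rightarrow> bool" where
  "adj G u v \<longleftrightarrow> {u, v} \<in> edges G"

definition connected_set :: "'a graph \<Rightarrow> 'a set \<Rightarrow> bool" where
  "connected_set G S \<longleftrightarrow>
     (\<forall>u\<in>S. \<forall>v\<in>S. (u, v) \<in> {(x, y). x \<in> S \<and> y \<in> S \<and> adj G x y}\<^sup>*)"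

definition is_cycle :: "'a graph \<Rightarrow> 'a list \<Rightarrow> bool" where
  "is_cycle G xs \<longleftrightarrow> length xs \<ge> 3 \<and> distinct xs \<and> set xs \<subseteq> verts G \<and>
     (\<forall>i. Suc i < length xs \<longrightarrow> adj G (xs ! i) (xs ! Suc i)) \<and>
     adj G (last xs) (hd xs)"

definition is_tree :: "'a graph \<Rightarrow> bool" where
  "is_tree T \<longleftrightarrow> graph T \<and> verts T \<noteq> {} \<and> connected_set T (verts T) \<and>
     (\<nexists>xs. is_cycle T xs)"

definition tree_decomp :: "'a graph \<Rightarrow> nat graph \<Rightarrow> (nat \<Rightarrow> 'a set) \<Rightarrow> bool" where
  "tree_decomp G T B \<longleftrightarrow> is_tree T \<and>
     (\<forall>t\<in>verts T. B t \<subseteq> verts G) \<and>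
     (\<forall>v\<in>verts G. \<exists>t\<in>verts T. v \<in> B t) \<and>
     (\<forall>e\<in>edges G. \<exists>t\<in>verts T. e \<subseteq> B t) \<and>
     (\<forall>v\<in>verts G. connected_set T {t\<in>verts T. v \<in> B t})"

definition induced_matching :: "'a graph \<Rightarrow> 'a set set \<Rightarrow> bool" where
  "induced_matching G M \<longleftrightarrow> M \<subseteq> edges G \<and>
     (\<forall>e\<in>M. \<forall>f\<in>M. e \<noteq> f \<longrightarrow> e \<inter> f = {}) \<and>
     (\<forall>e\<in>edges G. e \<subseteq> \<Union>M \<longrightarrow> e \<in> M)"

definition independent :: "'a graph \<Rightarrow> 'a set \<Rightarrow> bool" where
  "independent G I \<longleftrightarrow> I \<subseteq> verts G \<and> (\<forall>u\<in>I. \<forall>v\<in>I. \<not> adj G u v)"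

definition mu :: "'a graph \<Rightarrow> 'a set \<Rightarrow> nat" where
  "mu G S = Max {card M | M. induced_matching G M \<and> (\<forall>e\<in>M. e \<inter> S \<noteq> {})}"

definition alpha :: "'a graph \<Rightarrow> 'a set \<Rightarrow> nat" where
  "alpha G S = Max {card I | I. independent G I \<and> I \<subseteq> S}"

definition decomp_value :: "('a graph \<Rightarrow> 'a set \<Rightarrow> nat) \<Rightarrow> 'a graph \<Rightarrow> nat graph \<Rightarrow> (nat \<Rightarrow> 'a set) \<Rightarrow> nat" where
  "decomp_value lam G T B = Max ((\<lambda>t. lam G (B t)) ` verts T)"

definition param_tw :: "('a graph \<Rightarrow> 'a set \<Rightarrow> nat) \<Rightarrow> 'a graph \<Rightarrow> nat" where
  "param_tw lam G = Inf {decomp_value lam G T B | T B. tree_decomp G T B}"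

definition alpha_tw :: "'a graph \<Rightarrow> nat" where "alpha_tw G = param_tw alpha G"
definition mu_tw :: "'a graph \<Rightarrow> nat" where "mu_tw G = param_tw mu G"

text \<open>M(G): original vertex v is Inl v, its new pendant vertex v' is Inr v.\<close>
definition pendant_graph :: "'a graph \<Rightarrow> ('a + 'a) graph" where
  "pendant_graph G = (Inl ` verts G \<union> Inr ` verts G,
     (\<lambda>e. Inl ` e) ` edges G \<union> {{Inl v, Inr v} | v. v \<in> verts G})"

end

theory Submission
  imports Defs
begin

lemma pendant_edges:
  "e \<in> edges (pendant_graph G) \<longleftrightarrow> (\<exists>f\<in>edges G. e = Inl ` f) \<or> (\<exists>v\<in>verts G. e = {Inl v, Inr v})"
  by (auto simp: pendant_graph_def)

lemma pendant_verts: "verts (pendant_graph G) = Inl ` verts G \<union> Inr ` verts G"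
  by (simp add: pendant_graph_def)

lemma graph_pendant: assumes "graph G" shows "graph (pendant_graph G)"
proof -
  have "finite (verts (pendant_graph G))" using assms unfolding graph_def pendant_verts by simp
  moreover have "\<exists>u v. e = {u, v} \<and> u \<noteq> v \<and> u \<in> verts (pendant_graph G) \<and> v \<in> verts (pendant_graph G)"
    if "e \<in> edges (pendant_graph G)" for e
  proof -
    from that consider (a) f where "f \<in> edges G" "e = Inl ` f" | (b) v where "v \<in> verts G" "e = {Inl v, Inr v}"
      unfolding pendant_edges by blast
    then show ?thesis
    proof cases
      case a
      then obtain u v where "f = {u,v}" "u \<noteq> v" "u \<in> verts G" "v \<in> verts G" using assms unfolding graph_def by blast
      then have "e = {Inl u, Inl v} \<and> Inl u \<noteq> Inl v \<and> Inl u \<in> verts (pendant_graph G) \<and> Inl v \<in> verts (pendant_graph G)"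
        using a by (simp add: pendant_verts)
      then show ?thesis by (rule exI[where x="Inl u", OF exI[where x="Inl v"]])
    next
      case b
      then have "e = {Inl v, Inr v} \<and> Inl v \<noteq> Inr v \<and> Inl v \<in> verts (pendant_graph G) \<and> Inr v \<in> verts (pendant_graph G)"
        by (simp add: pendant_verts)
      then show ?thesis by (rule exI[where x="Inl v", OF exI[where x="Inr v"]])
    qed
  qed
  ultimately show ?thesis unfolding graph_def by blast
qed

lemma graph_edgeD:
  assumes "graph G" "e \<in> edges G"
  shows "\<exists>u v. e = {u, v} \<and> u \<noteq> v \<and> u \<in> verts G \<and> v \<in> verts G"
proof -
  have "\<forall>e\<in>edges G. \<exists>u v. e = {u, v} \<and> u \<noteq> v \<and> u \<in> verts G \<and> v \<in> verts G"
    using assms(1) unfolding graph_def by (rule conjunct2)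
  then show ?thesis using assms(2) by (rule bspec)
qed

lemma Inl_edge: "f \<in> edges G \<Longrightarrow> Inl ` f \<in> edges (pendant_graph G)"
  unfolding pendant_graph_def by simp

lemma graph_edges_finite: "graph G \<Longrightarrow> finite (edges G)"
proof -
  assume g: "graph G"
  have fv: "finite (verts G)" using g unfolding graph_def by (rule conjunct1)
  have "edges G \<subseteq> Pow (verts G)"
  proof
    fix e assume "e \<in> edges G"
    then obtain u v where "e = {u, v}" "u \<in> verts G" "v \<in> verts G" using g unfolding graph_def by blast
    then show "e \<in> Pow (verts G)" by blast
  qed
  then show ?thesis using fv by (metis finite_Pow_iff finite_subset)
qed

lemma graph_edge_ne: "graph G \<Longrightarrow> e \<in> edges G \<Longrightarrow> e \<noteq> {}"
  unfolding graph_def by blast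

lemma mu_finite:
  assumes "graph G"
  shows "finite {card M | M. induced_matching G M \<and> (\<forall>e\<in>M. e \<inter> S \<noteq> {})}"
proof -
  have "{card M | M. induced_matching G M \<and> (\<forall>e\<in>M. e \<inter> S \<noteq> {})} \<subseteq> {..card (edges G)}"
    using graph_edges_finite[OF assms] by (auto simp: induced_matching_def intro: card_mono)
  then show ?thesis by (rule finite_subset) simp
qed

lemma mu_ge:
  assumes "graph G" "induced_matching G M" "\<forall>e\<in>M. e \<inter> S \<noteq> {}"
  shows "card M \<le> mu G S"
  unfolding mu_def using mu_finite[OF assms(1)] assms(2,3) by (intro Max_ge) auto

lemma mu_le:
  assumes "graph G" "\<And>M. induced_matching G M \<Longrightarrow> \<forall>e\<in>M. e \<inter> S \<noteq> {} \<Longrightarrow> card M \<le> k"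
  shows "mu G S \<le> k"
proof -
  have "induced_matching G {}" using graph_edge_ne[OF assms(1)] by (auto simp: induced_matching_def)
  then show ?thesis unfolding mu_def using mu_finite[OF assms(1)] assms(2)
    by (intro Max.boundedI) auto
qed

lemma alpha_finite:
  assumes "graph G"
  shows "finite {card I | I. independent G I \<and> I \<subseteq> S}"
proof -
  have "{card I | I. independent G I \<and> I \<subseteq> S} \<subseteq> {..card (verts G)}"
    using assms by (auto simp: independent_def graph_def intro: card_mono)
  then show ?thesis by (rule finite_subset) simp
qed

lemma alpha_ge:
  assumes "graph G" "independent G I" "I \<subseteq> S"
  shows "card I \<le> alpha G S"
  unfolding alpha_def using alpha_finite[OF assms(1)] assms(2,3) by (intro Max_ge) auto

lemma alpha_le:
  assumes "graph G" "\<And>I. independent G I \<Longrightarrow> I \<subseteq> S \<Longrightarrow> card I \<le> k"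
  shows "alpha G S \<le> k"
proof -
  have "independent G {}" by (auto simp: independent_def)
  then show ?thesis unfolding alpha_def using alpha_finite[OF assms(1)] assms(2)
    by (intro Max.boundedI) auto
qed

lemma alpha_le_mu:
  assumes g: "graph G"
  shows "alpha G {v. Inl v \<in> S} \<le> mu (pendant_graph G) S"
proof (rule alpha_le[OF g])
  fix I assume ind: "independent G I" and IS: "I \<subseteq> {v. Inl v \<in> S}"
  define M where "M = (\<lambda>v. {Inl v, Inr v :: 'a + 'a}) ` I"
  have inj: "inj_on (\<lambda>v. {Inl v, Inr v :: 'a + 'a}) I"
    by (auto simp: inj_on_def doubleton_eq_iff)
  have cM: "card M = card I" unfolding M_def using inj by (rule card_image)
  have "induced_matching (pendant_graph G) M"
    unfolding induced_matching_def
  proof (intro conjI ballI impI)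
    show "M \<subseteq> edges (pendant_graph G)"
    proof
      fix e assume "e \<in> M"
      then obtain x where x: "x \<in> I" "e = {Inl x, Inr x}" unfolding M_def by blast
      then have "x \<in> verts G" using ind unfolding independent_def by blast
      then show "e \<in> edges (pendant_graph G)" unfolding pendant_edges using x by blast
    qed
  next
    fix e f assume ef: "e \<in> M" "f \<in> M" "e \<noteq> f"
    then obtain x y where "e = {Inl x, Inr x}" "f = {Inl y, Inr y}" unfolding M_def by blast
    then show "e \<inter> f = {}" using ef(3) by auto
  next
    fix e assume e: "e \<in> edges (pendant_graph G)" and sub: "e \<subseteq> \<Union>M"
    from e consider (a) f where "f \<in> edges G" "e = Inl ` f" | (b) v where "v \<in> verts G" "e = {Inl v, Inr v}"
      unfolding pendant_edges by blast
    then show "e \<in> M"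
    proof cases
      case a
      then obtain u w where uw: "f = {u,w}" "u \<noteq> w" using g unfolding graph_def by blast
      have memI: "z \<in> I" if zM: "Inl z \<in> \<Union>M" for z
      proof -
        obtain x where "x \<in> I" "Inl z \<in> {Inl x, Inr x :: 'a + 'a}" using zM unfolding M_def by blast
        then show ?thesis by simp
      qed
      have "Inl u \<in> \<Union>M" "Inl w \<in> \<Union>M" using sub a uw by blast+
      then have "u \<in> I" "w \<in> I" using memI by blast+
      moreover have "adj G u w" using a uw by (simp add: adj_def)
      ultimately show ?thesis using ind unfolding independent_def by blast
    next
      case b
      then have "Inr v \<in> \<Union>M" using sub by blast
      then obtain x where "x \<in> I" "Inr v \<in> {Inl x, Inr x :: 'a + 'a}" unfolding M_def by blast
      then have "v \<in> I" by simp
      then show ?thesis using b unfolding M_def by blast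
    qed
  qed
  moreover have "\<forall>e\<in>M. e \<inter> S \<noteq> {}"
  proof
    fix e assume "e \<in> M"
    then obtain x where "x \<in> I" "e = {Inl x, Inr x}" unfolding M_def by blast
    then show "e \<inter> S \<noteq> {}" using IS by blast
  qed
  ultimately have "card M \<le> mu (pendant_graph G) S" by (rule mu_ge[OF graph_pendant[OF g]])
  then show "card I \<le> mu (pendant_graph G) S" using cM by simp
qed

lemma mu_le_alpha:
  assumes g: "graph G" and BV: "B \<subseteq> verts G"
  shows "mu (pendant_graph G) (Inl ` B \<union> Inr ` B) \<le> alpha G B"
proof (rule mu_le[OF graph_pendant[OF g]])
  fix M assume im: "induced_matching (pendant_graph G) M" and hit: "\<forall>e\<in>M. e \<inter> (Inl ` B \<union> Inr ` B) \<noteq> {}"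
  have ex: "\<exists>v\<in>B. Inl v \<in> e" if "e \<in> M" for e
  proof -
    have e: "e \<in> edges (pendant_graph G)" using im that unfolding induced_matching_def by blast
    from e consider (a) f where "f \<in> edges G" "e = Inl ` f" | (b) v where "v \<in> verts G" "e = {Inl v, Inr v}"
      unfolding pendant_edges by blast
    note cs = this
    have h: "e \<inter> (Inl ` B \<union> Inr ` B) \<noteq> {}" using hit that by blast
    then obtain x where x: "x \<in> e" "x \<in> Inl ` B \<union> Inr ` B" by blast
    from cs show ?thesis
    proof cases
      case a
      then obtain y where "y \<in> f" "x = Inl y" using x by blast
      then show ?thesis using x a by blast
    next
      case b
      then have "x = Inl v \<or> x = Inr v" using x by blast
      then have "v \<in> B" using x by blast
      then show ?thesis using b by blast
    qed
  qed
  define g' where "g' (e :: ('a + 'a) set) = (SOME v. v \<in> B \<and> Inl v \<in> e)" for e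
  have gp: "g' e \<in> B \<and> Inl (g' e) \<in> e" if eM: "e \<in> M" for e
  proof -
    have "\<exists>v. v \<in> B \<and> Inl v \<in> e" using ex[OF eM] by blast
    then show ?thesis unfolding g'_def by (rule someI_ex)
  qed
  have disj: "\<And>e f. e \<in> M \<Longrightarrow> f \<in> M \<Longrightarrow> e \<noteq> f \<Longrightarrow> e \<inter> f = {}" using im unfolding induced_matching_def by blast
  have inj: "inj_on g' M"
  proof (rule inj_onI)
    fix e f assume ef: "e \<in> M" "f \<in> M" "g' e = g' f"
    have "Inl (g' e) \<in> e" using gp[OF ef(1)] by simp
    moreover have "Inl (g' e) \<in> f" using gp[OF ef(2)] ef(3) by simp
    ultimately have "e \<inter> f \<noteq> {}" by blast
    then show "e = f" using disj[OF ef(1) ef(2)] by blast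
  qed
  have "independent G (g' ` M)"
    unfolding independent_def
  proof (intro conjI ballI)
    show "g' ` M \<subseteq> verts G" using gp BV by blast
  next
    fix u w assume u: "u \<in> g' ` M" and w: "w \<in> g' ` M"
    show "\<not> adj G u w"
    proof
      assume "adj G u w"
      then have uwE: "{u,w} \<in> edges G" by (simp add: adj_def)
      have "u \<noteq> w"
      proof
        assume "u = w"
        then have "{u} \<in> edges G" using uwE by simp
        from graph_edgeD[OF g this] obtain a b where ab: "{u} = {a, b} \<and> a \<noteq> b \<and> a \<in> verts G \<and> b \<in> verts G"
          by (elim exE)
        then show False by auto
      qed
      obtain e1 where e1: "e1 \<in> M" "u = g' e1" using u by blast
      obtain e2 where e2: "e2 \<in> M" "w = g' e2" using w by blast
      have E: "Inl ` {u,w} \<in> edges (pendant_graph G)" using uwE by (rule Inl_edge)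
      have "Inl u \<in> \<Union>M" using gp[OF e1(1)] e1 by blast
      moreover have "Inl w \<in> \<Union>M" using gp[OF e2(1)] e2 by blast
      ultimately have "Inl ` {u,w} \<subseteq> \<Union>M" by simp
      moreover have "\<forall>e\<in>edges (pendant_graph G). e \<subseteq> \<Union>M \<longrightarrow> e \<in> M"
        using im unfolding induced_matching_def by (elim conjE)
      ultimately have EM: "Inl ` {u,w} \<in> M" using E by simp
      have "Inl u \<in> e1 \<inter> Inl ` {u,w}" using gp[OF e1(1)] e1(2) by simp
      then have E1: "e1 = Inl ` {u,w}"
      proof (rule contrapos_pp)
        assume "e1 \<noteq> Inl ` {u,w}"
        then have "e1 \<inter> Inl ` {u,w} = {}" by (rule disj[OF e1(1) EM])
        then show "Inl u \<notin> e1 \<inter> Inl ` {u,w}" by simp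
      qed
      have "Inl w \<in> e2 \<inter> Inl ` {u,w}" using gp[OF e2(1)] e2(2) by simp
      then have E2: "e2 = Inl ` {u,w}"
      proof (rule contrapos_pp)
        assume "e2 \<noteq> Inl ` {u,w}"
        then have "e2 \<inter> Inl ` {u,w} = {}" by (rule disj[OF e2(1) EM])
        then show "Inl w \<notin> e2 \<inter> Inl ` {u,w}" by simp
      qed
      from E1 E2 have "e1 = e2" by (rule trans[OF _ sym])
      then have "g' e1 = g' e2" by (rule arg_cong)
      then have "u = w" using e1(2) e2(2) by metis
      then show False using \<open>u \<noteq> w\<close> by simp
    qed
  qed
  moreover have "g' ` M \<subseteq> B" using gp by blast
  ultimately have "card (g' ` M) \<le> alpha G B" by (rule alpha_ge[OF g])
  then show "card M \<le> alpha G B" using card_image[OF inj] by simp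
qed

lemma decomp_finite: "tree_decomp G T B \<Longrightarrow> finite (verts T) \<and> verts T \<noteq> {}"
  unfolding tree_decomp_def is_tree_def graph_def by blast

lemma decomp_value_mono:
  assumes "finite (verts T)" "verts T \<noteq> {}" "\<And>t. t \<in> verts T \<Longrightarrow> l1 G1 (B1 t) \<le> l2 G2 (B2 t)"
  shows "decomp_value l1 G1 T B1 \<le> decomp_value l2 G2 T B2"
  unfolding decomp_value_def
proof (rule Max.boundedI)
  show "finite ((\<lambda>t. l1 G1 (B1 t)) ` verts T)" using assms by simp
  show "(\<lambda>t. l1 G1 (B1 t)) ` verts T \<noteq> {}" using assms by simp
  fix a assume "a \<in> (\<lambda>t. l1 G1 (B1 t)) ` verts T"
  then obtain t where t: "t \<in> verts T" "a = l1 G1 (B1 t)" by blast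
  have "l2 G2 (B2 t) \<le> Max ((\<lambda>t. l2 G2 (B2 t)) ` verts T)" using assms t by (intro Max_ge) auto
  then show "a \<le> Max ((\<lambda>t. l2 G2 (B2 t)) ` verts T)" using assms(3)[OF t(1)] t by simp
qed

lemma decomp_lift:
  assumes "tree_decomp G T B"
  shows "tree_decomp (pendant_graph G) T (\<lambda>t. Inl ` B t \<union> Inr ` B t)"
proof -
  have eq: "{t \<in> verts T. x \<in> Inl ` B t \<union> Inr ` B t} = {t \<in> verts T. v \<in> B t}"
    if "x = Inl v \<or> x = Inr v" for x v using that by auto
  show ?thesis
    using assms unfolding tree_decomp_def
  proof (intro conjI ballI)
    fix e assume "e \<in> edges (pendant_graph G)"
    then consider (a) f where "f \<in> edges G" "e = Inl ` f" | (b) v where "v \<in> verts G" "e = {Inl v, Inr v}"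
      unfolding pendant_edges by blast
    then show "\<exists>t\<in>verts T. e \<subseteq> Inl ` B t \<union> Inr ` B t"
    proof cases
      case a
      then obtain t where "t \<in> verts T" "f \<subseteq> B t" using assms unfolding tree_decomp_def by blast
      then show ?thesis using a by blast
    next
      case b
      then obtain t where "t \<in> verts T" "v \<in> B t" using assms unfolding tree_decomp_def by blast
      then show ?thesis using b by blast
    qed
  next
    fix x assume "x \<in> verts (pendant_graph G)"
    then obtain v where v: "v \<in> verts G" "x = Inl v \<or> x = Inr v" unfolding pendant_verts by blast
    show "connected_set T {t \<in> verts T. x \<in> Inl ` B t \<union> Inr ` B t}"
      using assms v eq[OF v(2)] unfolding tree_decomp_def by simp
  next
    fix x assume "x \<in> verts (pendant_graph G)"
    then obtain v where v: "v \<in> verts G" "x = Inl v \<or> x = Inr v" unfolding pendant_verts by blast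
    then obtain t where "t \<in> verts T" "v \<in> B t" using assms unfolding tree_decomp_def by blast
    then show "\<exists>t\<in>verts T. x \<in> Inl ` B t \<union> Inr ` B t" using v by blast
  next
    fix t assume "t \<in> verts T"
    then have "B t \<subseteq> verts G" using assms unfolding tree_decomp_def by blast
    then show "Inl ` B t \<union> Inr ` B t \<subseteq> verts (pendant_graph G)" unfolding pendant_verts by blast
  next
    show "is_tree T" using assms unfolding tree_decomp_def by blast
  qed
qed

lemma decomp_restrict:
  assumes "tree_decomp (pendant_graph G) T B"
  shows "tree_decomp G T (\<lambda>t. {v. Inl v \<in> B t})"
  using assms unfolding tree_decomp_def
proof (intro conjI ballI)
  fix e assume "e \<in> edges G"
  then have "Inl ` e \<in> edges (pendant_graph G)" by (rule Inl_edge)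
  then obtain t where "t \<in> verts T" "Inl ` e \<subseteq> B t" using assms unfolding tree_decomp_def by blast
  then show "\<exists>t\<in>verts T. e \<subseteq> {v. Inl v \<in> B t}" by blast
next
  fix v assume "v \<in> verts G"
  then have "Inl v \<in> verts (pendant_graph G)" unfolding pendant_verts by blast
  then show "connected_set T {t \<in> verts T. v \<in> {v. Inl v \<in> B t}}"
    using assms unfolding tree_decomp_def by simp
next
  fix v assume "v \<in> verts G"
  then have "Inl v \<in> verts (pendant_graph G)" unfolding pendant_verts by blast
  then show "\<exists>t\<in>verts T. v \<in> {v. Inl v \<in> B t}" using assms unfolding tree_decomp_def by simp
next
  fix t assume "t \<in> verts T"
  then have "B t \<subseteq> verts (pendant_graph G)" using assms unfolding tree_decomp_def by blast
  then show "{v. Inl v \<in> B t} \<subseteq> verts G" unfolding pendant_verts by blast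
next
  show "is_tree T" using assms unfolding tree_decomp_def by blast
qed

lemma Inf_le_helper:
  fixes A B :: "nat set"
  assumes "\<forall>x\<in>A. \<exists>y\<in>B. y \<le> x" "A \<noteq> {}"
  shows "Inf B \<le> Inf A"
proof -
  have "Inf A \<in> A" using assms(2) by (rule Inf_nat_def1)
  then obtain y where "y \<in> B" "y \<le> Inf A" using assms(1) by blast
  moreover have "Inf B \<le> y" using \<open>y \<in> B\<close> by (simp add: cInf_lower)
  ultimately show ?thesis by simp
qed

lemma Inf_eq_helper:
  fixes A B :: "nat set"
  assumes "\<forall>x\<in>A. \<exists>y\<in>B. y \<le> x" "\<forall>y\<in>B. \<exists>x\<in>A. x \<le> y"
  shows "Inf A = Inf B"
proof (cases "A = {}")
  case True
  then have "B = {}" using assms(2) by blast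
  then show ?thesis using True by simp
next
  case False
  then have "B \<noteq> {}" using assms(1) by blast
  then show ?thesis using Inf_le_helper[OF assms(1) False] Inf_le_helper[OF assms(2)] by simp
qed

theorem mainTheorem9:
  fixes G :: "'a graph"
  assumes "graph G"
  shows "alpha_tw G = mu_tw (pendant_graph G)"
  unfolding alpha_tw_def mu_tw_def param_tw_def
proof (rule Inf_eq_helper)
  show "\<forall>x\<in>{decomp_value alpha G T B |T B. tree_decomp G T B}.
          \<exists>y\<in>{decomp_value mu (pendant_graph G) T B |T B. tree_decomp (pendant_graph G) T B}. y \<le> x"
  proof
    fix x assume "x \<in> {decomp_value alpha G T B |T B. tree_decomp G T B}"
    then obtain T B where TB: "tree_decomp G T B" "x = decomp_value alpha G T B" by blast
    have "decomp_value mu (pendant_graph G) T (\<lambda>t. Inl ` B t \<union> Inr ` B t) \<le> decomp_value alpha G T B"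
      using decomp_finite[OF TB(1)]
    proof (intro decomp_value_mono)
      fix t assume "t \<in> verts T"
      then have "B t \<subseteq> verts G" using TB(1) unfolding tree_decomp_def by blast
      then show "mu (pendant_graph G) (Inl ` B t \<union> Inr ` B t) \<le> alpha G (B t)"
        by (rule mu_le_alpha[OF assms])
    qed auto
    then show "\<exists>y\<in>{decomp_value mu (pendant_graph G) T B |T B. tree_decomp (pendant_graph G) T B}. y \<le> x"
      using decomp_lift[OF TB(1)] TB(2) by blast
  qed
next
  show "\<forall>y\<in>{decomp_value mu (pendant_graph G) T B |T B. tree_decomp (pendant_graph G) T B}.
          \<exists>x\<in>{decomp_value alpha G T B |T B. tree_decomp G T B}. x \<le> y"
  proof
    fix y assume "y \<in> {decomp_value mu (pendant_graph G) T B |T B. tree_decomp (pendant_graph G) T B}"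
    then obtain T B where TB: "tree_decomp (pendant_graph G) T B" "y = decomp_value mu (pendant_graph G) T B" by blast
    have "decomp_value alpha G T (\<lambda>t. {v. Inl v \<in> B t}) \<le> decomp_value mu (pendant_graph G) T B"
      using decomp_finite[OF TB(1)]
    proof (intro decomp_value_mono)
      fix t assume "t \<in> verts T"
      show "alpha G {v. Inl v \<in> B t} \<le> mu (pendant_graph G) (B t)"
        by (rule alpha_le_mu[OF assms])
    qed auto
    then show "\<exists>x\<in>{decomp_value alpha G T B |T B. tree_decomp G T B}. x \<le> y"
      using decomp_restrict[OF TB(1)] TB(2) by blast
  qed
qed

end
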